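(* Let $c\in[0,1]$. For every countable collection of languages $\mathcal{L}$, there is a set-based generator that generates in the limit from $\mathcal{L}$ and achieves set-based upper density at least $1-c$ under enumerations without noise and with $c$-omissions.
   Context: The universe is $U=\mathbb{N}$ with its natural order. A language is an infinite subset of $U$; a collection is a countable family of languages. For $A,B\subseteq\mathbb{N}$ with $B=\{b_1<b_2<\cdots\}$, $\mu_{\rm low}(A,B)=\liminf_n\frac1n|A\cap\{b_1,\dots,b_n\}|$. An enumeration of $K$ without noise and with $c$-omissions is a sequence listing each element of some $\hat K\subseteq K$ exactly once and nothing else, where $\mu_{\rm low}(\hat K,K)\ge1-c$; $S_n=\{x_1,\dots,x_n\}$. A set-based generator outputs at step $n$, from $x_1,\dots,x_n$ and knowledge of $\mathcal{L}$ (not $K$), a set $A_n\subseteq U\setminus S_n$. It generates in the limit if for every $K\in\mathcal{L}$ and admissible enumeration there is $n^\star$ with $A_n\subseteq K$ for all $n\ge n^\star$; it achieves set-based upper density $\rho$ if $\limsup_n\mu_{\rm low}(A_n,K)\ge\rho$. *)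

theory Defs
  imports Complex_Main "HOL-Library.Countable_Set" "HOL-Library.Extended_Real" "HOL-Library.Liminf_Limsup"
begin

text \<open>Lower density of A relative to B = {b_1 < b_2 < ...}; enumerate B is 0-indexed,
  so enumerate B ` {..<n} = {b_1,...,b_n}.\<close>
definition mu_low :: "nat set \<Rightarrow> nat set \<Rightarrow> ereal" where
  "mu_low A B = liminf (\<lambda>n. ereal (real (card (A \<inter> enumerate B ` {..<n})) / real n))"

definition is_collection :: "nat set set \<Rightarrow> bool" where
  "is_collection L \<longleftrightarrow> countable L \<and> (\<forall>K\<in>L. infinite K)"

text \<open>x 0, x 1, ... stands for x_1, x_2, ...: an enumeration of K without noise and with
  c-omissions lists each element of Khat = range x exactly once, Khat \<subseteq> K, and
  mu_low Khat K \<ge> 1 - c.\<close>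
definition omission_enum :: "real \<Rightarrow> nat set \<Rightarrow> (nat \<Rightarrow> nat) \<Rightarrow> bool" where
  "omission_enum c K x \<longleftrightarrow> inj x \<and> range x \<subseteq> K \<and> mu_low (range x) K \<ge> ereal (1 - c)"

definition prefix :: "(nat \<Rightarrow> nat) \<Rightarrow> nat \<Rightarrow> nat list" where
  "prefix x n = map x [0..<n]"

definition set_based_generator :: "(nat list \<Rightarrow> nat set) \<Rightarrow> bool" where
  "set_based_generator G \<longleftrightarrow> (\<forall>xs. G xs \<inter> set xs = {})"

end

theory Submission
  imports Defs "HOL-Analysis.Analysis"
begin

lemma mu_low_mono:
  assumes "A \<subseteq> A'"
  shows "mu_low A K \<le> mu_low A' K"
  unfolding mu_low_def
proof (rule Liminf_mono, rule always_eventually, intro allI)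
  fix n
  have "card (A \<inter> enumerate K ` {..<n}) \<le> card (A' \<inter> enumerate K ` {..<n})"
    by (rule card_mono) (use assms in auto)
  then show "ereal (real (card (A \<inter> enumerate K ` {..<n})) / real n)
     \<le> ereal (real (card (A' \<inter> enumerate K ` {..<n})) / real n)"
    by (simp add: divide_right_mono)
qed

lemma mu_low_diff_finite:
  assumes "finite F"
  shows "mu_low A K \<le> mu_low (A - F) K"
proof -
  define a where "a = (\<lambda>n. ereal (real (card (A \<inter> enumerate K ` {..<n})) / real n))"
  define b where "b = (\<lambda>n. ereal (real (card ((A - F) \<inter> enumerate K ` {..<n})) / real n))"
  define u where "u = (\<lambda>n::nat. ereal (real (card F) / real n))"
  have le: "a n \<le> u n + b n" for n
  proof -
    have "A \<inter> enumerate K ` {..<n} \<subseteq> ((A - F) \<inter> enumerate K ` {..<n}) \<union> F" by auto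
    then have "card (A \<inter> enumerate K ` {..<n}) \<le> card (((A - F) \<inter> enumerate K ` {..<n}) \<union> F)"
      by (intro card_mono) (use assms in auto)
    also have "\<dots> \<le> card ((A - F) \<inter> enumerate K ` {..<n}) + card F" by (rule card_Un_le)
    finally have "real (card (A \<inter> enumerate K ` {..<n})) \<le> real (card F) + real (card ((A - F) \<inter> enumerate K ` {..<n}))"
      by linarith
    then have "real (card (A \<inter> enumerate K ` {..<n})) / real n \<le> real (card F) / real n + real (card ((A - F) \<inter> enumerate K ` {..<n})) / real n"
      by (simp add: divide_right_mono add_divide_distrib[symmetric])
    then show ?thesis unfolding a_def b_def u_def by simp
  qed
  have ul: "u \<longlonglongrightarrow> 0"
  proof -
    have "(\<lambda>n. real (card F) / real n) \<longlonglongrightarrow> 0"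
      by (rule lim_const_over_n)
    then have "(\<lambda>n. ereal (real (card F) / real n)) \<longlonglongrightarrow> ereal 0"
      by (rule tendsto_ereal)
    then show ?thesis unfolding u_def by (simp add: zero_ereal_def)
  qed
  have "liminf a \<le> liminf (\<lambda>n. u n + b n)"
    by (rule Liminf_mono) (use le in auto)
  also have "\<dots> = 0 + liminf b"
    by (rule ereal_liminf_lim_add[OF ul]) simp
  finally show ?thesis unfolding mu_low_def a_def b_def by simp
qed

lemma limsup_frequently:
  fixes f :: "nat \<Rightarrow> ereal"
  assumes "\<forall>N. \<exists>n\<ge>N. a \<le> f n"
  shows "a \<le> limsup f"
  unfolding limsup_INF_SUP
proof (rule INF_greatest)
  fix N :: nat
  obtain n where "n \<ge> N" "a \<le> f n" using assms by blast
  then show "a \<le> (SUP m\<in>{N..}. f m)" by (intro SUP_upper2[of n]) auto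
qed

lemma set_prefix: "set (prefix x n) = x ` {..<n}"
  unfolding prefix_def by auto

lemma butlast_prefix: "butlast (prefix x n) = prefix x (n - 1)"
  unfolding prefix_def by (cases n) (simp_all add: map_butlast)

lemma length_prefix: "length (prefix x n) = n"
  unfolding prefix_def by simp

theorem proposition6p3:
  fixes c :: real and L :: "nat set set"
  assumes "0 \<le> c" and "c \<le> 1" and "is_collection L"
  shows "\<exists>G. set_based_generator G \<and>
           (\<forall>K\<in>L. \<forall>x. omission_enum c K x \<longrightarrow>
              (\<exists>n0. \<forall>n\<ge>n0. G (prefix x n) \<subseteq> K) \<and>
              limsup (\<lambda>n. mu_low (G (prefix x n)) K) \<ge> ereal (1 - c))"
proof -
  define Lf where "Lf = from_nat_into L"
  define P where "P = (\<lambda>xs i. set (butlast xs) \<subseteq> Lf i \<and> \<not> set xs \<subseteq> Lf i)"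
  define m where "m = (\<lambda>xs. if \<exists>i. P xs i then (LEAST i. P xs i) else length xs)"
  define G where "G = (\<lambda>xs. \<Inter>{Lf i | i. i < m xs \<and> set xs \<subseteq> Lf i} - set xs)"
  have gen: "set_based_generator G" unfolding set_based_generator_def G_def by auto
  have main: "(\<exists>n0. \<forall>n\<ge>n0. G (prefix x n) \<subseteq> K) \<and>
              limsup (\<lambda>n. mu_low (G (prefix x n)) K) \<ge> ereal (1 - c)"
    if KL: "K \<in> L" and om: "omission_enum c K x" for K x
  proof -
    have cnt: "countable L" using assms(3) unfolding is_collection_def by auto
    obtain z where z: "Lf z = K" using from_nat_into_surj[OF cnt KL] unfolding Lf_def by metis
    from om have rK: "range x \<subseteq> K" and dens: "mu_low (range x) K \<ge> ereal (1 - c)"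
      unfolding omission_enum_def by auto
    define cons where "cons = (\<lambda>i n. x ` {..<n} \<subseteq> Lf i)"
    have cons_anti: "cons i n' \<Longrightarrow> n \<le> n' \<Longrightarrow> cons i n" for i n n'
      unfolding cons_def by auto
    have Pn: "P (prefix x n) i \<longleftrightarrow> cons i (n - 1) \<and> \<not> cons i n" for n i
      unfolding P_def cons_def butlast_prefix set_prefix by simp
    have stab: "\<exists>N. \<forall>n\<ge>N. \<not> P (prefix x n) i" for i
    proof (cases "\<exists>n1. \<not> cons i n1")
      case True
      then obtain n1 where "\<not> cons i n1" by blast
      then have "\<forall>n\<ge>Suc n1. \<not> P (prefix x n) i"
        using cons_anti[of i "n - 1" n1 for n] unfolding Pn by (metis Suc_le_eq less_imp_Suc_add diff_Suc_1 le_add1)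
      then show ?thesis by blast
    next
      case False
      then show ?thesis unfolding Pn by blast
    qed
    have part1: "\<exists>n0. \<forall>n\<ge>n0. G (prefix x n) \<subseteq> K"
    proof -
      have "\<exists>N. \<forall>n\<ge>N. \<forall>i\<le>z. \<not> P (prefix x n) i"
      proof (induction z)
        case 0
        then show ?case using stab[of 0] by auto
      next
        case (Suc z)
        then obtain N1 where N1: "\<forall>n\<ge>N1. \<forall>i\<le>z. \<not> P (prefix x n) i" by blast
        obtain N2 where N2: "\<forall>n\<ge>N2. \<not> P (prefix x n) (Suc z)" using stab by blast
        show ?case
          by (rule exI[of _ "max N1 N2"]) (use N1 N2 le_Suc_eq in auto)
      qed
      then obtain N where N: "\<forall>n\<ge>N. \<forall>i\<le>z. \<not> P (prefix x n) i" by blast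
      have "G (prefix x n) \<subseteq> K" if n: "n \<ge> max N (Suc z)" for n
      proof -
        have "z < m (prefix x n)"
        proof (cases "\<exists>i. P (prefix x n) i")
          case True
          then have "P (prefix x n) (LEAST i. P (prefix x n) i)" by (rule LeastI_ex)
          then have "\<not> (LEAST i. P (prefix x n) i) \<le> z" using N n by auto
          then show ?thesis using True unfolding m_def by auto
        next
          case False
          then show ?thesis unfolding m_def length_prefix using n by auto
        qed
        moreover have "set (prefix x n) \<subseteq> Lf z" using rK z unfolding set_prefix by auto
        ultimately have "Lf z \<in> {Lf i | i. i < m (prefix x n) \<and> set (prefix x n) \<subseteq> Lf i}" by blast
        then show ?thesis unfolding G_def using z by blast
      qed
      then show ?thesis by blast
    qed
    define good where "good = (\<lambda>n. \<forall>i < m (prefix x n). cons i n \<longrightarrow> range x \<subseteq> Lf i)"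
    have inf_good: "\<exists>n\<ge>N. good n" for N
    proof (rule ccontr)
      assume "\<not> (\<exists>n\<ge>N. good n)"
      then have bad: "\<forall>n\<ge>N. \<exists>i < m (prefix x n). cons i n \<and> \<not> range x \<subseteq> Lf i"
        unfolding good_def by blast
      define j where "j = (LEAST i. cons i N \<and> \<not> range x \<subseteq> Lf i)"
      have ex: "\<exists>i. cons i N \<and> \<not> range x \<subseteq> Lf i" using bad by blast
      have j: "cons j N" "\<not> range x \<subseteq> Lf j" using LeastI_ex[OF ex] unfolding j_def by auto
      have jmin: "\<And>i. cons i N \<Longrightarrow> \<not> range x \<subseteq> Lf i \<Longrightarrow> j \<le> i"
        unfolding j_def by (rule Least_le) auto
      have exn: "\<exists>n. \<not> cons j n"
      proof -
        obtain k where "x k \<notin> Lf j" using j(2) by auto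
        then have "\<not> cons j (Suc k)" unfolding cons_def by auto
        then show ?thesis by blast
      qed
      define n' where "n' = (LEAST n. \<not> cons j n)"
      have n'1: "\<not> cons j n'" using LeastI_ex[OF exn] unfolding n'_def .
      have n'N: "N < n'" using n'1 j(1) cons_anti by (metis not_le_imp_less)
      have "cons j (n' - 1)"
      proof (rule ccontr)
        assume "\<not> cons j (n' - 1)"
        then have "n' \<le> n' - 1" unfolding n'_def by (rule Least_le)
        then show False using n'N by simp
      qed
      then have Pj: "P (prefix x n') j" unfolding Pn using n'1 by simp
      then have "m (prefix x n') \<le> j" unfolding m_def by (auto intro: Least_le)
      moreover obtain i where i: "i < m (prefix x n')" "cons i n'" "\<not> range x \<subseteq> Lf i"
        using bad n'N by (meson less_imp_le)
      ultimately have "i < j" by simp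
      moreover have "cons i N" using i(2) n'N cons_anti by (meson less_imp_le)
      ultimately show False using jmin i(3) by fastforce
    qed
    have "ereal (1 - c) \<le> mu_low (G (prefix x n)) K" if "good n" for n
    proof -
      have "range x - set (prefix x n) \<subseteq> G (prefix x n)"
        using that unfolding good_def G_def cons_def set_prefix by auto
      then have "mu_low (range x - set (prefix x n)) K \<le> mu_low (G (prefix x n)) K"
        by (rule mu_low_mono)
      moreover have "mu_low (range x) K \<le> mu_low (range x - set (prefix x n)) K"
        by (rule mu_low_diff_finite) (simp add: set_prefix)
      ultimately show ?thesis using dens by simp
    qed
    then have "ereal (1 - c) \<le> limsup (\<lambda>n. mu_low (G (prefix x n)) K)"
      using inf_good by (intro limsup_frequently) blast
    with part1 show ?thesis by blast
  qed
  show ?thesis using gen main by blast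
qed

end
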